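(* Let $\beta\in(0,1)$, $z>0$, $c>0$, and let $N$ be a positive integer. Let $F$ be a continuous cumulative distribution function with support $[\underline{w},\overline{w}]$, $\underline{w}<\overline{w}$, and mean $\mu_w$. Assume $\underline{w}<(1-\beta)z+\beta\mu_w$ and $z+c<\overline{w}$. For $x\in[\underline{w},\overline{w}]$ put $$\Upsilon(x)=\int_{\underline{w}}^{x}x\,dF(w)+\int_{x}^{\overline{w}}w\,dF(w).$$ Then the equation $x=z(1-\beta)+\beta\,\Upsilon(x)$ has exactly one solution $x\in[\underline{w},\overline{w}]$; call it $w_R(0)$. Defining recursively $w_R(n)=(z+c)(1-\beta)+\beta\,\Upsilon(w_R(n-1))$ for $n=1,\dots,N$, we have $$\overline{w}>w_R(N)>\cdots>w_R(n+1)>w_R(n)>\cdots>w_R(0)>\underline{w}.$$ Moreover, the same conclusions hold when the support of $F$ is $[\underline{w},\infty)$ (with $F$ continuous with finite mean $\mu_w$, $\underline{w}<(1-\beta)z+\beta\mu_w$, $\Upsilon(x)=\int_{\underline{w}}^{x}x\,dF(w)+\int_x^\infty w\,dF(w)$): the equation $x=z(1-\beta)+\beta\Upsilon(x)$ has a unique solution $w_R(0)\in[\underline{w},\infty)$ and $\underline{w}<w_R(0)<w_R(1)<\cdots<w_R(N)<\infty$.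
   Context: Interpretation (the paper's model): a risk-neutral, infinitely lived worker maximizes $\mathrm{E}_0\sum_{t\ge0}\beta^t x_t$, where $x_t$ is income. While unemployed, the worker draws one i.i.d. wage offer per period from $F$; an accepted job paying $w$ is kept forever (value $W(w)=w/(1-\beta)$). While unemployed with $n\ge1$ remaining periods of unemployment-insurance benefits, flow income is $z+c$ ($z$ = value of nonwork, $c$ = benefit) and the state moves to $n-1$ after a rejection; with $n=0$ remaining periods flow income is $z$ and the state stays at $0$. The value of unemployment satisfies $U(n)=z+c+\beta\mathrm{E}[\max\{U(n-1),W(w)\}]$ for $n\ge1$ and $U(0)=z+\beta\mathrm{E}[\max\{U(0),W(w)\}]$. The reservation wage $w_R(n)$ is defined by $W(w_R(n))=U(n)$, and it satisfies exactly the equations given in the claim; the optimal policy in state $n$ is to accept any offer $w\ge w_R(n)$. No possibility of extension of benefits is considered here. *)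

theory Defs
  imports "HOL-Probability.Probability"
begin

definition dist_support :: "real measure \<Rightarrow> real set" where
  "dist_support M = {x. \<forall>e>0. 0 < measure M (ball x e)}"

definition Upsilon :: "real measure \<Rightarrow> real \<Rightarrow> real \<Rightarrow> real \<Rightarrow> real" where
  "Upsilon M lo hi x = (LINT w:{lo..x}|M. x) + (LINT w:{x..hi}|M. w)"

definition Upsilon_inf :: "real measure \<Rightarrow> real \<Rightarrow> real \<Rightarrow> real" where
  "Upsilon_inf M lo x = (LINT w:{lo..x}|M. x) + (LINT w:{x..}|M. w)"

end

theory Submission
  imports Defs
begin

lemma supp_AE:
  assumes M: "real_distribution M"
  shows "AE x in M. x \<in> dist_support M"
proof -
  interpret real_distribution M by fact
  define F where "F = {ball x e | x e. e > 0 \<and> measure M (ball x e) = 0}"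
  have "\<And>S. S \<in> F \<Longrightarrow> open S" unfolding F_def by auto
  from Lindelof[OF this] obtain F' where F': "F' \<subseteq> F" "countable F'" "\<Union>F' = \<Union>F" by blast
  have "(\<Union>S\<in>F'. S) \<in> null_sets M"
  proof (rule null_sets_UN'[OF F'(2)])
    fix S assume "S \<in> F'"
    then have "S \<in> F" using F' by auto
    then obtain x e where "S = ball x e" "measure M (ball x e) = 0" unfolding F_def by auto
    then show "S \<in> null_sets M"
      by (simp add: emeasure_eq_measure null_sets_def)
  qed
  moreover have "{x \<in> space M. x \<notin> dist_support M} \<subseteq> \<Union>F"
  proof
    fix x assume "x \<in> {x \<in> space M. x \<notin> dist_support M}"
    then obtain e where "e > 0" "\<not> 0 < measure M (ball x e)" unfolding dist_support_def by auto
    then have "measure M (ball x e) = 0" using measure_nonneg[of M "ball x e"] by linarith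
    then have "ball x e \<in> F" using \<open>e > 0\<close> unfolding F_def by blast
    then show "x \<in> \<Union>F" using \<open>e > 0\<close> by (intro UnionI[of "ball x e"]) auto
  qed
  ultimately show ?thesis using F'(3) by (intro AE_I'[where N="\<Union>F"]) auto
qed

lemma Ups_eq:
  assumes M: "real_distribution M" and na: "\<And>x. measure M {x} = 0"
    and ae: "AE w in M. lo \<le> w \<and> w \<le> hi" and int: "integrable M (\<lambda>w. w)"
  shows "Upsilon M lo hi x = (\<integral>w. max x w \<partial>M)"
proof -
  interpret real_distribution M by fact
  have i1: "integrable M (\<lambda>w. indicator {lo..x} w *\<^sub>R x)"
    using integrable_real_mult_indicator[of "{lo..x}" M "\<lambda>_. x"] by auto
  have i2: "integrable M (\<lambda>w. indicator {x..hi} w *\<^sub>R w)"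
    using integrable_real_mult_indicator[OF _ int] by (auto simp: mult.commute)
  have "{x} \<in> null_sets M" using na[of x] by (simp add: emeasure_eq_measure null_sets_def)
  then have aex: "AE w in M. w \<noteq> x" by (rule AE_I') auto
  have "AE w in M. indicator {lo..x} w *\<^sub>R x + indicator {x..hi} w *\<^sub>R w = max x w"
    using ae aex by eventually_elim (auto simp: indicator_def)
  then have "(\<integral>w. max x w \<partial>M) = (\<integral>w. indicator {lo..x} w *\<^sub>R x + indicator {x..hi} w *\<^sub>R w \<partial>M)"
    by (intro integral_cong_AE[symmetric]) auto
  also have "\<dots> = Upsilon M lo hi x"
    unfolding Upsilon_def set_lebesgue_integral_def using i1 i2 by (simp add: integral_add)
  finally show ?thesis by simp
qed

lemma Ups_inf_eq:
  assumes M: "real_distribution M" and na: "\<And>x. measure M {x} = 0"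
    and ae: "AE w in M. lo \<le> w" and int: "integrable M (\<lambda>w. w)"
  shows "Upsilon_inf M lo x = (\<integral>w. max x w \<partial>M)"
proof -
  interpret real_distribution M by fact
  have i1: "integrable M (\<lambda>w. indicator {lo..x} w *\<^sub>R x)"
    using integrable_real_mult_indicator[of "{lo..x}" M "\<lambda>_. x"] by auto
  have i2: "integrable M (\<lambda>w. indicator {x..} w *\<^sub>R w)"
    using integrable_real_mult_indicator[OF _ int] by (auto simp: mult.commute)
  have "{x} \<in> null_sets M" using na[of x] by (simp add: emeasure_eq_measure null_sets_def)
  then have aex: "AE w in M. w \<noteq> x" by (rule AE_I') auto
  have "AE w in M. indicator {lo..x} w *\<^sub>R x + indicator {x..} w *\<^sub>R w = max x w"
    using ae aex by eventually_elim (auto simp: indicator_def)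
  then have "(\<integral>w. max x w \<partial>M) = (\<integral>w. indicator {lo..x} w *\<^sub>R x + indicator {x..} w *\<^sub>R w \<partial>M)"
    by (intro integral_cong_AE[symmetric]) auto
  also have "\<dots> = Upsilon_inf M lo x"
    unfolding Upsilon_inf_def set_lebesgue_integral_def using i1 i2 by (simp add: integral_add)
  finally show ?thesis by simp
qed


lemma Emax_props:
  assumes M: "real_distribution M" and int: "integrable M (\<lambda>w. w)"
    and ae: "AE w in M. lo \<le> w" and lo: "lo \<in> dist_support M"
  shows "\<And>a b. a \<le> b \<Longrightarrow> (\<integral>w. max a w \<partial>M) \<le> (\<integral>w. max b w \<partial>M)"
    and "\<And>a b. a \<le> b \<Longrightarrow> (\<integral>w. max b w \<partial>M) - (\<integral>w. max a w \<partial>M) \<le> b - a"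
    and "\<And>a b. lo \<le> a \<Longrightarrow> a < b \<Longrightarrow> (\<integral>w. max a w \<partial>M) < (\<integral>w. max b w \<partial>M)"
    and "(\<integral>w. max lo w \<partial>M) = (\<integral>w. w \<partial>M)"
    and "\<And>x. 0 \<le> x \<Longrightarrow> (\<integral>w. max x w \<partial>M) \<le> x + (\<integral>w. \<bar>w\<bar> \<partial>M)"
proof -
  interpret real_distribution M by fact
  have im: "\<And>x. integrable M (\<lambda>w. max x w)" using int by auto
  show "\<And>a b. a \<le> b \<Longrightarrow> (\<integral>w. max a w \<partial>M) \<le> (\<integral>w. max b w \<partial>M)"
    using im by (intro integral_mono) auto
  show "\<And>a b. a \<le> b \<Longrightarrow> (\<integral>w. max b w \<partial>M) - (\<integral>w. max a w \<partial>M) \<le> b - a"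
  proof -
    fix a b :: real assume "a \<le> b"
    have "(\<integral>w. max b w \<partial>M) \<le> (\<integral>w. max a w + (b - a) \<partial>M)"
      using im \<open>a \<le> b\<close> by (intro integral_mono) (auto simp: max_def)
    also have "\<dots> = (\<integral>w. max a w \<partial>M) + (b - a)"
      using im by (simp add: integral_add prob_space[simplified])
    finally show "(\<integral>w. max b w \<partial>M) - (\<integral>w. max a w \<partial>M) \<le> b - a" by simp
  qed
  show "\<And>a b. lo \<le> a \<Longrightarrow> a < b \<Longrightarrow> (\<integral>w. max a w \<partial>M) < (\<integral>w. max b w \<partial>M)"
  proof -
    fix a b :: real assume ab: "lo \<le> a" "a < b"
    define m where "m = (a + b) / 2"
    have "0 < measure M (ball lo (m - lo))" using lo ab unfolding dist_support_def m_def by auto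
    also have "\<dots> \<le> measure M {..<m}"
      by (intro finite_measure_mono) (auto simp: dist_real_def)
    finally have pos: "0 < measure M {..<m}" .
    have ii: "integrable M (\<lambda>w. indicator {..<m} w * ((b - a) / 2))"
      using integrable_real_mult_indicator[of "{..<m}" M "\<lambda>_. (b - a) / 2"] by (auto simp: mult.commute)
    have "0 < measure M {..<m} * ((b - a) / 2)" using pos ab by simp
    also have "\<dots> = (\<integral>w. indicator {..<m} w * ((b - a) / 2) \<partial>M)" by simp
    also have "\<dots> \<le> (\<integral>w. max b w - max a w \<partial>M)"
      using im ii ab by (intro integral_mono) (auto simp: indicator_def m_def)
    also have "\<dots> = (\<integral>w. max b w \<partial>M) - (\<integral>w. max a w \<partial>M)"
      using im by (simp add: integral_diff)
    finally show "(\<integral>w. max a w \<partial>M) < (\<integral>w. max b w \<partial>M)" by simp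
  qed
  show "(\<integral>w. max lo w \<partial>M) = (\<integral>w. w \<partial>M)"
    using ae by (intro integral_cong_AE) auto
  show "\<And>x. 0 \<le> x \<Longrightarrow> (\<integral>w. max x w \<partial>M) \<le> x + (\<integral>w. \<bar>w\<bar> \<partial>M)"
  proof -
    fix x :: real assume "0 \<le> x"
    have "(\<integral>w. max x w \<partial>M) \<le> (\<integral>w. x + \<bar>w\<bar> \<partial>M)"
      using im int \<open>0 \<le> x\<close> by (intro integral_mono) auto
    also have "\<dots> = x + (\<integral>w. \<bar>w\<bar> \<partial>M)"
      using int by (simp add: integral_add prob_space[simplified])
    finally show "(\<integral>w. max x w \<partial>M) \<le> x + (\<integral>w. \<bar>w\<bar> \<partial>M)" .
  qed
qed


lemma abstract_part:
  fixes U :: "real \<Rightarrow> real" and \<beta> z c lo X :: real and N :: nat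
  assumes b: "0 < \<beta>" "\<beta> < 1" and zc: "0 < z" "0 < c"
    and mono: "\<And>a b. a \<le> b \<Longrightarrow> U a \<le> U b"
    and lip: "\<And>a b. a \<le> b \<Longrightarrow> U b - U a \<le> b - a"
    and strict: "\<And>a b. lo \<le> a \<Longrightarrow> a < b \<Longrightarrow> U a < U b"
    and low: "lo < (1 - \<beta>) * z + \<beta> * U lo"
    and X: "lo \<le> X" "(1 - \<beta>) * z \<le> X - \<beta> * U X"
  shows "\<exists>x. lo \<le> x \<and> x \<le> X \<and> x = z * (1 - \<beta>) + \<beta> * U x"
    and "\<And>x y. x = z * (1 - \<beta>) + \<beta> * U x \<Longrightarrow> y = z * (1 - \<beta>) + \<beta> * U y \<Longrightarrow> x = y"
    and "\<And>wR. wR 0 = z * (1 - \<beta>) + \<beta> * U (wR 0) \<Longrightarrow>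
           (\<forall>n\<in>{1..N}. wR n = (z + c) * (1 - \<beta>) + \<beta> * U (wR (n - 1))) \<Longrightarrow>
           lo < wR 0 \<and> (\<forall>n<N. wR n < wR (Suc n))"
    and "\<And>wR. U X = X \<Longrightarrow> z + c < X \<Longrightarrow> wR 0 = z * (1 - \<beta>) + \<beta> * U (wR 0) \<Longrightarrow>
           (\<forall>n\<in>{1..N}. wR n = (z + c) * (1 - \<beta>) + \<beta> * U (wR (n - 1))) \<Longrightarrow>
           wR N < X"
proof -
  define h where "h x = x - \<beta> * U x" for x
  have hstrict: "h a < h b" if "a < b" for a b
  proof -
    have "U b - U a \<le> b - a" using lip that by simp
    then have "\<beta> * (U b - U a) \<le> \<beta> * (b - a)" using b by (intro mult_left_mono) auto
    also have "\<dots> < b - a" using b that by simp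
    finally show ?thesis unfolding h_def by (simp add: algebra_simps)
  qed
  have hmono: "a \<le> b" if "h a \<le> h b" for a b
    using hstrict[of b a] that by force
  have "1-lipschitz_on UNIV U"
  proof (rule lipschitz_onI)
    fix x y :: real
    show "dist (U x) (U y) \<le> 1 * dist x y"
    proof (cases "x \<le> y")
      case True then show ?thesis using lip[of x y] mono[of x y] by (simp add: dist_real_def)
    next
      case False then show ?thesis using lip[of y x] mono[of y x] by (simp add: dist_real_def)
    qed
  qed simp
  then have "continuous_on UNIV U" by (rule lipschitz_on_continuous_on)
  then have cU: "isCont U x" for x by (simp add: continuous_on_eq_continuous_at)
  have ch: "isCont h x" for x unfolding h_def by (intro continuous_intros cU)
  have "\<exists>x. lo \<le> x \<and> x \<le> X \<and> h x = (1 - \<beta>) * z"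
  proof (rule IVT[of h])
    show "h lo \<le> (1 - \<beta>) * z" using low unfolding h_def by (simp add: algebra_simps)
    show "(1 - \<beta>) * z \<le> h X" using X unfolding h_def by (simp add: algebra_simps)
  qed (use X ch in auto)
  then show "\<exists>x. lo \<le> x \<and> x \<le> X \<and> x = z * (1 - \<beta>) + \<beta> * U x"
    unfolding h_def by (auto simp: algebra_simps)
  show "\<And>x y. x = z * (1 - \<beta>) + \<beta> * U x \<Longrightarrow> y = z * (1 - \<beta>) + \<beta> * U y \<Longrightarrow> x = y"
  proof -
    fix x y assume "x = z * (1 - \<beta>) + \<beta> * U x" "y = z * (1 - \<beta>) + \<beta> * U y"
    then have "h x = h y" unfolding h_def by (simp add: algebra_simps)
    then show "x = y" using hmono[of x y] hmono[of y x] by simp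
  qed
  fix wR :: "nat \<Rightarrow> real"
  assume w0: "wR 0 = z * (1 - \<beta>) + \<beta> * U (wR 0)"
    and wn: "\<forall>n\<in>{1..N}. wR n = (z + c) * (1 - \<beta>) + \<beta> * U (wR (n - 1))"
  have hw0: "h (wR 0) = (1 - \<beta>) * z" using w0 unfolding h_def by (simp add: algebra_simps)
  have lo0: "lo < wR 0"
  proof (rule ccontr)
    assume "\<not> lo < wR 0"
    then have "h (wR 0) \<le> h lo" using hstrict[of "wR 0" lo] by (cases "wR 0 = lo") auto
    then show False using hw0 low unfolding h_def by (simp add: algebra_simps)
  qed
  have step: "wR (Suc n) = (z + c) * (1 - \<beta>) + \<beta> * U (wR n)" if "n < N" for n
    using wn[rule_format, of "Suc n"] that by simp
  have inc: "lo \<le> wR n \<and> wR n < wR (Suc n)" if "n < N" for n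
    using that
  proof (induction n)
    case 0
    have "wR 1 = wR 0 + c * (1 - \<beta>)" using step[OF 0] w0 by (simp add: algebra_simps)
    then show ?case using lo0 b zc by simp
  next
    case (Suc n)
    then have IH: "lo \<le> wR n" "wR n < wR (Suc n)" by auto
    have "U (wR n) < U (wR (Suc n))" using strict IH by blast
    then have "wR (Suc n) < wR (Suc (Suc n))"
      using step[of n] step[of "Suc n"] Suc.prems b by simp
    then show ?case using IH by simp
  qed
  show "lo < wR 0 \<and> (\<forall>n<N. wR n < wR (Suc n))" using lo0 inc by blast
  assume UX: "U X = X" and zcX: "z + c < X"
  have "wR n < X" if "n \<le> N" for n
    using that
  proof (induction n)
    case 0
    have "(1 - \<beta>) * z < (1 - \<beta>) * X" using zcX b zc by (intro mult_strict_left_mono) auto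
    then have "h (wR 0) < h X" using hw0 UX unfolding h_def by (simp add: algebra_simps)
    then have hh: "h (wR 0) < h X" .
    show ?case
    proof (rule ccontr)
      assume "\<not> wR 0 < X"
      then have "X < wR 0 \<or> X = wR 0" by auto
      then show False using hstrict[of X "wR 0"] hh by auto
    qed
  next
    case (Suc n)
    then have "U (wR n) \<le> U X" using mono by auto
    then have "\<beta> * U (wR n) \<le> \<beta> * X" using UX b by simp
    moreover have "(z + c) * (1 - \<beta>) + \<beta> * X < X"
    proof -
      have "(z + c) * (1 - \<beta>) < X * (1 - \<beta>)" using zcX b by (intro mult_strict_right_mono) auto
      then show ?thesis by (simp add: algebra_simps)
    qed
    ultimately show ?case using step[of n] Suc.prems by simp
  qed
  then show "wR N < X" by simp
qed

theorem proposition1: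
  fixes \<beta> z c :: real and N :: nat
  assumes "0 < \<beta>" "\<beta> < 1" "0 < z" "0 < c" "0 < N"
  shows
   "(\<forall>(M :: real measure) (lo :: real) (hi :: real).
       real_distribution M \<and> (\<forall>x. isCont (cdf M) x) \<and>
       dist_support M = {lo..hi} \<and> lo < hi \<and>
       lo < (1 - \<beta>) * z + \<beta> * (integral\<^sup>L M (\<lambda>w. w)) \<and> z + c < hi
     \<longrightarrow>
       (\<exists>!x. x \<in> {lo..hi} \<and> x = z * (1 - \<beta>) + \<beta> * Upsilon M lo hi x) \<and>
       (\<forall>wR :: nat \<Rightarrow> real.
          wR 0 \<in> {lo..hi} \<and> wR 0 = z * (1 - \<beta>) + \<beta> * Upsilon M lo hi (wR 0) \<and>
          (\<forall>n\<in>{1..N}. wR n = (z + c) * (1 - \<beta>) + \<beta> * Upsilon M lo hi (wR (n - 1)))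
        \<longrightarrow> hi > wR N \<and> (\<forall>n<N. wR n < wR (Suc n)) \<and> wR 0 > lo))
  \<and>
   (\<forall>(M :: real measure) (lo :: real).
       real_distribution M \<and> (\<forall>x. isCont (cdf M) x) \<and>
       dist_support M = {lo..} \<and> integrable M (\<lambda>w. w) \<and>
       lo < (1 - \<beta>) * z + \<beta> * (integral\<^sup>L M (\<lambda>w. w))
     \<longrightarrow>
       (\<exists>!x. x \<in> {lo..} \<and> x = z * (1 - \<beta>) + \<beta> * Upsilon_inf M lo x) \<and>
       (\<forall>wR :: nat \<Rightarrow> real.
          wR 0 \<in> {lo..} \<and> wR 0 = z * (1 - \<beta>) + \<beta> * Upsilon_inf M lo (wR 0) \<and>
          (\<forall>n\<in>{1..N}. wR n = (z + c) * (1 - \<beta>) + \<beta> * Upsilon_inf M lo (wR (n - 1)))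
        \<longrightarrow> lo < wR 0 \<and> (\<forall>n<N. wR n < wR (Suc n))))"
proof (rule conjI; intro allI impI)
  fix M :: "real measure" and lo hi :: real
  assume H: "real_distribution M \<and> (\<forall>x. isCont (cdf M) x) \<and>
       dist_support M = {lo..hi} \<and> lo < hi \<and>
       lo < (1 - \<beta>) * z + \<beta> * (integral\<^sup>L M (\<lambda>w. w)) \<and> z + c < hi"
  then have M: "real_distribution M" and cc: "\<And>x. isCont (cdf M) x"
    and supp: "dist_support M = {lo..hi}" and lh: "lo < hi"
    and low: "lo < (1 - \<beta>) * z + \<beta> * (integral\<^sup>L M (\<lambda>w. w))" and zch: "z + c < hi" by auto
  interpret real_distribution M by fact
  have na: "measure M {x} = 0" for x using cc isCont_cdf by blast
  have ae: "AE w in M. lo \<le> w \<and> w \<le> hi" using supp_AE[OF M] supp by simp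
  have int: "integrable M (\<lambda>w. w)"
  proof (rule Bochner_Integration.integrable_bound[where M=M and f="\<lambda>_. max \<bar>lo\<bar> \<bar>hi\<bar>"])
    show "integrable M (\<lambda>_. max \<bar>lo\<bar> \<bar>hi\<bar>)" by simp
    show "(\<lambda>w. w) \<in> borel_measurable M" by simp
    show "AE x in M. norm x \<le> norm (max \<bar>lo\<bar> \<bar>hi\<bar>)"
      using ae by eventually_elim auto
  qed
  define U where "U x = (\<integral>w. max x w \<partial>M)" for x
  have UU: "Upsilon M lo hi x = U x" for x unfolding U_def using Ups_eq[OF M na ae int] .
  have lo_s: "lo \<in> dist_support M" using supp lh by simp
  have ae1: "AE w in M. lo \<le> w" using ae by auto
  note P = Emax_props[OF M int ae1 lo_s]
  have Uhi: "U hi = hi"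
  proof -
    have "U hi = (\<integral>w. hi \<partial>M)" unfolding U_def using ae by (intro integral_cong_AE) auto
    then show ?thesis using prob_space by simp
  qed
  have X2: "(1 - \<beta>) * z \<le> hi - \<beta> * U hi"
  proof -
    have "(1 - \<beta>) * z \<le> (1 - \<beta>) * hi" using zch assms by (intro mult_left_mono) auto
    then show ?thesis using Uhi by (simp add: algebra_simps)
  qed
  have m1: "\<And>a b. a \<le> b \<Longrightarrow> U a \<le> U b" using P(1) unfolding U_def .
  have m2: "\<And>a b. a \<le> b \<Longrightarrow> U b - U a \<le> b - a" using P(2) unfolding U_def .
  have m3: "\<And>a b. lo \<le> a \<Longrightarrow> a < b \<Longrightarrow> U a < U b" using P(3) unfolding U_def .
  have low': "lo < (1 - \<beta>) * z + \<beta> * U lo" using P(4) low unfolding U_def by simp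
  have lh': "lo \<le> hi" using lh by simp
  note A = abstract_part[where U=U and lo=lo and X=hi]
  have E1: "\<exists>!x. x \<in> {lo..hi} \<and> x = z * (1 - \<beta>) + \<beta> * Upsilon M lo hi x"
    unfolding UU using A(1)[OF assms(1-4) m1 m2 m3 low' lh' X2] A(2)[OF assms(1-4) m1 m2 m3 low' lh' X2] by (metis atLeastAtMost_iff)
  have E2: "(\<forall>wR :: nat \<Rightarrow> real.
          wR 0 \<in> {lo..hi} \<and> wR 0 = z * (1 - \<beta>) + \<beta> * Upsilon M lo hi (wR 0) \<and>
          (\<forall>n\<in>{1..N}. wR n = (z + c) * (1 - \<beta>) + \<beta> * Upsilon M lo hi (wR (n - 1)))
        \<longrightarrow> hi > wR N \<and> (\<forall>n<N. wR n < wR (Suc n)) \<and> wR 0 > lo)"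
  proof (intro allI impI)
    fix wR :: "nat \<Rightarrow> real"
    assume W: "wR 0 \<in> {lo..hi} \<and> wR 0 = z * (1 - \<beta>) + \<beta> * Upsilon M lo hi (wR 0) \<and>
            (\<forall>n\<in>{1..N}. wR n = (z + c) * (1 - \<beta>) + \<beta> * Upsilon M lo hi (wR (n - 1)))"
    then have W1: "wR 0 = z * (1 - \<beta>) + \<beta> * U (wR 0)"
      and W2: "\<forall>n\<in>{1..N}. wR n = (z + c) * (1 - \<beta>) + \<beta> * U (wR (n - 1))" unfolding UU by auto
    show "hi > wR N \<and> (\<forall>n<N. wR n < wR (Suc n)) \<and> wR 0 > lo"
      using A(3)[OF assms(1-4) m1 m2 m3 low' lh' X2 W1 W2] A(4)[OF assms(1-4) m1 m2 m3 low' lh' X2 Uhi zch W1 W2] by auto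
  qed
  from E1 E2 show "(\<exists>!x. x \<in> {lo..hi} \<and> x = z * (1 - \<beta>) + \<beta> * Upsilon M lo hi x) \<and>
   (\<forall>wR :: nat \<Rightarrow> real.
          wR 0 \<in> {lo..hi} \<and> wR 0 = z * (1 - \<beta>) + \<beta> * Upsilon M lo hi (wR 0) \<and>
          (\<forall>n\<in>{1..N}. wR n = (z + c) * (1 - \<beta>) + \<beta> * Upsilon M lo hi (wR (n - 1)))
        \<longrightarrow> hi > wR N \<and> (\<forall>n<N. wR n < wR (Suc n)) \<and> wR 0 > lo)" by (rule conjI)
next
  fix M :: "real measure" and lo :: real
  assume H: "real_distribution M \<and> (\<forall>x. isCont (cdf M) x) \<and>
       dist_support M = {lo..} \<and> integrable M (\<lambda>w. w) \<and>
       lo < (1 - \<beta>) * z + \<beta> * (integral\<^sup>L M (\<lambda>w. w))"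
  then have M: "real_distribution M" and cc: "\<And>x. isCont (cdf M) x"
    and supp: "dist_support M = {lo..}" and int: "integrable M (\<lambda>w. w)"
    and low: "lo < (1 - \<beta>) * z + \<beta> * (integral\<^sup>L M (\<lambda>w. w))" by auto
  interpret real_distribution M by fact
  have na: "measure M {x} = 0" for x using cc isCont_cdf by blast
  have ae: "AE w in M. lo \<le> w" using supp_AE[OF M] supp by simp
  define U where "U x = (\<integral>w. max x w \<partial>M)" for x
  have UU: "Upsilon_inf M lo x = U x" for x unfolding U_def using Ups_inf_eq[OF M na ae int] .
  have lo_s: "lo \<in> dist_support M" using supp by simp
  note P = Emax_props[OF M int ae lo_s]
  define K where "K = (\<integral>w. \<bar>w\<bar> \<partial>M)"
  have K0: "0 \<le> K" unfolding K_def by simp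
  define X where "X = max lo (z + \<beta> * K / (1 - \<beta>))"
  have "0 \<le> \<beta> * K / (1 - \<beta>)" using assms K0 by simp
  then have X0: "0 \<le> X" using assms unfolding X_def by linarith
  have X1: "lo \<le> X" unfolding X_def by simp
  have UX: "U X \<le> X + K" using P(5)[OF X0] unfolding K_def U_def .
  have X2: "(1 - \<beta>) * z \<le> X - \<beta> * U X"
  proof -
    have "z + \<beta> * K / (1 - \<beta>) \<le> X" unfolding X_def by simp
    then have "(1 - \<beta>) * (z + \<beta> * K / (1 - \<beta>)) \<le> (1 - \<beta>) * X"
      using assms by (intro mult_left_mono) auto
    moreover have "(1 - \<beta>) * (\<beta> * K / (1 - \<beta>)) = \<beta> * K" using assms by simp
    ultimately have "(1 - \<beta>) * z + \<beta> * K \<le> (1 - \<beta>) * X"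
      by (simp add: distrib_left)
    moreover have "\<beta> * U X \<le> \<beta> * (X + K)" using UX assms by (intro mult_left_mono) auto
    ultimately show ?thesis by (simp add: algebra_simps)
  qed
  have m1: "\<And>a b. a \<le> b \<Longrightarrow> U a \<le> U b" using P(1) unfolding U_def .
  have m2: "\<And>a b. a \<le> b \<Longrightarrow> U b - U a \<le> b - a" using P(2) unfolding U_def .
  have m3: "\<And>a b. lo \<le> a \<Longrightarrow> a < b \<Longrightarrow> U a < U b" using P(3) unfolding U_def .
  have low': "lo < (1 - \<beta>) * z + \<beta> * U lo" using P(4) low unfolding U_def by simp
  note A = abstract_part[where U=U and lo=lo and X=X]
  have E1: "\<exists>!x. x \<in> {lo..} \<and> x = z * (1 - \<beta>) + \<beta> * Upsilon_inf M lo x"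
    unfolding UU using A(1)[OF assms(1-4) m1 m2 m3 low' X1 X2] A(2)[OF assms(1-4) m1 m2 m3 low' X1 X2] by (metis atLeast_iff)
  have E2: "(\<forall>wR :: nat \<Rightarrow> real.
          wR 0 \<in> {lo..} \<and> wR 0 = z * (1 - \<beta>) + \<beta> * Upsilon_inf M lo (wR 0) \<and>
          (\<forall>n\<in>{1..N}. wR n = (z + c) * (1 - \<beta>) + \<beta> * Upsilon_inf M lo (wR (n - 1)))
        \<longrightarrow> lo < wR 0 \<and> (\<forall>n<N. wR n < wR (Suc n)))"
  proof (intro allI impI)
    fix wR :: "nat \<Rightarrow> real"
    assume W: "wR 0 \<in> {lo..} \<and> wR 0 = z * (1 - \<beta>) + \<beta> * Upsilon_inf M lo (wR 0) \<and>
            (\<forall>n\<in>{1..N}. wR n = (z + c) * (1 - \<beta>) + \<beta> * Upsilon_inf M lo (wR (n - 1)))"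
    then have W1: "wR 0 = z * (1 - \<beta>) + \<beta> * U (wR 0)"
      and W2: "\<forall>n\<in>{1..N}. wR n = (z + c) * (1 - \<beta>) + \<beta> * U (wR (n - 1))" unfolding UU by auto
    show "lo < wR 0 \<and> (\<forall>n<N. wR n < wR (Suc n))"
      using A(3)[OF assms(1-4) m1 m2 m3 low' X1 X2 W1 W2] by auto
  qed
  from E1 E2 show "(\<exists>!x. x \<in> {lo..} \<and> x = z * (1 - \<beta>) + \<beta> * Upsilon_inf M lo x) \<and>
   (\<forall>wR :: nat \<Rightarrow> real.
          wR 0 \<in> {lo..} \<and> wR 0 = z * (1 - \<beta>) + \<beta> * Upsilon_inf M lo (wR 0) \<and>
          (\<forall>n\<in>{1..N}. wR n = (z + c) * (1 - \<beta>) + \<beta> * Upsilon_inf M lo (wR (n - 1)))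
        \<longrightarrow> lo < wR 0 \<and> (\<forall>n<N. wR n < wR (Suc n)))" by (rule conjI)
qed

end
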